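(* Every maximal (with respect to inclusion) thin subset of $\mathbb{Z}_2^\omega$ is neither Borel nor meager.
   Context: $\mathbb{Z}_2^\omega$ is the Cantor cube of infinite binary sequences indexed by $\omega=\{0,1,2,\dots\}$, with the product (Tychonoff) topology. A set $T\subseteq\mathbb{Z}_2^\omega$ is thin if for every $n\in\omega$ the map $x\mapsto x|_{\omega\setminus\{n\}}$ is injective on $T$ (equivalently, no two distinct elements of $T$ differ in exactly one coordinate). *)

theory Defs
  imports "HOL-Analysis.Analysis"
begin

text \<open>The Cantor cube Z_2^omega is modelled as the type nat \<Rightarrow> bool, carrying the
  product topology (instance from Function_Topology; bool is discrete).\<close>

definition thin :: "(nat \<Rightarrow> bool) set \<Rightarrow> bool" where
  "thin T \<longleftrightarrow> (\<forall>n. inj_on (\<lambda>x. restrict x (UNIV - {n})) T)"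

definition maximal_thin :: "(nat \<Rightarrow> bool) set \<Rightarrow> bool" where
  "maximal_thin T \<longleftrightarrow> thin T \<and> (\<forall>S. thin S \<and> T \<subseteq> S \<longrightarrow> S = T)"

definition nowhere_dense :: "'a::topological_space set \<Rightarrow> bool" where
  "nowhere_dense A \<longleftrightarrow> interior (closure A) = {}"

definition meager :: "'a::topological_space set \<Rightarrow> bool" where
  "meager A \<longleftrightarrow> (\<exists>F. countable F \<and> (\<forall>N\<in>F. nowhere_dense N) \<and> A \<subseteq> \<Union>F)"

end

theory Submission
  imports Defs
begin

lemma o: "open (A::bool set)" by (rule open_discrete)
lemma hs_bool: "Hausdorff_space (euclidean :: bool topology)"
  unfolding Hausdorff_space_def
proof (intro allI impI)
  fix x y :: bool assume "x \<in> topspace euclidean \<and> y \<in> topspace euclidean \<and> x \<noteq> y"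
  then have "x \<noteq> y" by blast
  then have "{x} \<inter> {y} = {}" by blast
  then have d: "disjnt {x} {y}" unfolding disjnt_def .
  show "\<exists>U V. openin euclidean U \<and> openin euclidean V \<and> x \<in> U \<and> y \<in> V \<and> disjnt U V"
    by (rule exI[of _ "{x}"], rule exI[of _ "{y}"]) (simp only: d o open_openin[symmetric] singletonI simp_thms)
qed

lemma cs_bool: "compact_space (euclidean :: bool topology)"
  by (simp add: compact_space_def finite_imp_compact)

lemma cs_fun: "compact_space (euclidean :: (nat \<Rightarrow> bool) topology)"
  by (metis euclidean_product_topology compact_space_product_topology cs_bool)

lemma hs_fun: "Hausdorff_space (euclidean :: (nat \<Rightarrow> bool) topology)"
  by (metis euclidean_product_topology Hausdorff_space_product_topology hs_bool)

lemma baire: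
  fixes U :: "(nat \<Rightarrow> bool) set"
  assumes "open U" "U \<noteq> {}" shows "\<not> meager U"
proof
  assume "meager U"
  then obtain F where F: "countable F" "\<And>N. N \<in> F \<Longrightarrow> nowhere_dense N" "U \<subseteq> \<Union>F"
    unfolding meager_def by blast
  have "euclidean interior_of \<Union>(closure ` F) = {}"
  proof (rule Baire_category_alt[where X=euclidean])
    show "completely_metrizable_space (euclidean :: (nat \<Rightarrow> bool) topology) \<or> locally_compact_space (euclidean :: (nat \<Rightarrow> bool) topology) \<and> regular_space (euclidean :: (nat \<Rightarrow> bool) topology)"
      using compact_Hausdorff_imp_regular_space[OF cs_fun hs_fun] compact_imp_locally_compact_space[OF cs_fun] by simp
    show "countable (closure ` F)" using F by simp
    fix T assume "T \<in> closure ` F"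
    then show "closedin euclidean T \<and> euclidean interior_of T = {}"
      using F(2) by (auto simp: nowhere_dense_def)
  qed
  moreover have "U \<subseteq> interior (\<Union>(closure ` F))"
    proof (rule interior_maximal[OF _ assms(1)])
    show "U \<subseteq> \<Union>(closure ` F)"
    proof
      fix y assume "y \<in> U"
      then obtain N where "N \<in> F" "y \<in> N" using F(3) by blast
      moreover have "y \<in> closure N" using \<open>y \<in> N\<close> closure_subset by blast
      ultimately show "y \<in> \<Union>(closure ` F)" by blast
    qed
  qed
  ultimately have "U \<subseteq> {}" by (simp only: euclidean_interior_of)
  then show False using assms(2) by blast
qed

lemma meager_empty: "meager {}"
  unfolding meager_def by (rule exI[of _ "{}"]) auto

lemma meager_subset: "meager B \<Longrightarrow> A \<subseteq> B \<Longrightarrow> meager A"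
proof -
  assume "meager B" "A \<subseteq> B"
  then obtain F where "countable F" "\<forall>N\<in>F. nowhere_dense N" "B \<subseteq> \<Union>F" unfolding meager_def by blast
  then show "meager A" unfolding meager_def using \<open>A \<subseteq> B\<close> by (intro exI[of _ F] conjI) auto
qed

lemma meager_Un: "meager A \<Longrightarrow> meager B \<Longrightarrow> meager (A \<union> B)"
  unfolding meager_def
proof (elim exE conjE)
  fix F G assume "countable F" "\<forall>N\<in>F. nowhere_dense N" "A \<subseteq> \<Union>F"
    "countable G" "\<forall>N\<in>G. nowhere_dense N" "B \<subseteq> \<Union>G"
  then show "\<exists>F. countable F \<and> (\<forall>N\<in>F. nowhere_dense N) \<and> A \<union> B \<subseteq> \<Union>F"
    by (intro exI[of _ "F \<union> G"]) auto
qed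

lemma meager_UN:
  fixes A :: "nat \<Rightarrow> 'a::topological_space set"
  assumes "\<And>i. meager (A i)" shows "meager (\<Union>i. A i)"
proof -
  have "\<exists>F. countable F \<and> (\<forall>N\<in>F. nowhere_dense N) \<and> A i \<subseteq> \<Union>F" for i
    using assms[of i] unfolding meager_def .
  then have "\<forall>i. \<exists>F. countable F \<and> (\<forall>N\<in>F. nowhere_dense N) \<and> A i \<subseteq> \<Union>F" by (rule allI)
  then have "\<exists>F. \<forall>i. countable (F i) \<and> (\<forall>N\<in>F i. nowhere_dense N) \<and> A i \<subseteq> \<Union>(F i)"
    by (rule choice)
  then obtain F where F: "\<forall>i. countable (F i) \<and> (\<forall>N\<in>F i. nowhere_dense N) \<and> A i \<subseteq> \<Union>(F i)"
    by (elim exE)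
  show ?thesis unfolding meager_def
  proof (intro exI conjI)
    show "countable (\<Union>i. F i)" using F by (intro countable_UN) simp_all
    show "\<forall>N\<in>(\<Union>i. F i). nowhere_dense N" using F by simp
    show "(\<Union>i. A i) \<subseteq> \<Union>(\<Union>i. F i)"
    proof
      fix x assume "x \<in> (\<Union>i. A i)"
      then obtain i where "x \<in> A i" by (elim UN_E)
      then have "x \<in> \<Union>(F i)" using F by (elim allE[of _ i]) fast
      then show "x \<in> \<Union>(\<Union>i. F i)" by fast
    qed
  qed
qed

lemma closed_minus_interior_nd:
  assumes "closed C" shows "nowhere_dense (C - interior C)"
proof -
  let ?W = "interior (closure (C - interior C))"
  have "closure (C - interior C) \<subseteq> C"
    using assms by (simp add: closure_minimal)
  then have "?W \<subseteq> interior C"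
    by (simp add: interior_mono)
  then have "?W \<inter> (C - interior C) = {}" by blast
  then have "?W \<inter> closure (C - interior C) = {}"
    using open_Int_closure_eq_empty[of ?W "C - interior C"] by simp
  then show ?thesis unfolding nowhere_dense_def using interior_subset[of "closure (C - interior C)"] by blast
qed

definition bp :: "'a::topological_space set \<Rightarrow> bool" where
  "bp A \<longleftrightarrow> (\<exists>U. open U \<and> meager (A - U) \<and> meager (U - A))"

lemma borel_bp:
  assumes "A \<in> sets borel" shows "bp A"
proof -
  have "A \<in> sigma_sets UNIV {S. open S}" using assms by (simp add: sets_borel)
  then show ?thesis
  proof induction
    case (Basic a)
    then show ?case unfolding bp_def by (intro exI[of _ a]) (simp add: meager_empty)
  next
    case Empty
    show ?case unfolding bp_def by (intro exI[of _ "{}"]) (simp add: meager_empty)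
  next
    case (Compl a)
    then obtain U where U: "open U" "meager (a - U)" "meager (U - a)" unfolding bp_def by blast
    have nd: "meager (- U - interior (- U))"
      unfolding meager_def
      using closed_minus_interior_nd[of "- U"] U(1)
      by (intro exI[of _ "{- U - interior (- U)}"]) (simp add: closed_Compl)
    show ?case unfolding bp_def
    proof (intro exI conjI)
      show "open (interior (- U))" by simp
      show "meager (UNIV - a - interior (- U))"
        by (rule meager_subset[OF meager_Un[OF U(3) nd]]) blast
      show "meager (interior (- U) - (UNIV - a))"
        by (rule meager_subset[OF U(2)]) (use interior_subset in blast)
    qed
  next
    case (Union a)
    then have "\<forall>i. \<exists>U. open U \<and> meager (a i - U) \<and> meager (U - a i)"
      unfolding bp_def by blast
    then have "\<exists>U. \<forall>i. open (U i) \<and> meager (a i - U i) \<and> meager (U i - a i)"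
      by (rule choice)
    then obtain U where U: "\<And>i. open (U i) \<and> meager (a i - U i) \<and> meager (U i - a i)"
      by blast
    show ?case unfolding bp_def
    proof (intro exI conjI)
      show "open (\<Union>i. U i)" using U by (intro open_UN) blast
      show "meager (\<Union> (range a) - (\<Union>i. U i))"
        by (rule meager_subset[OF meager_UN[of "\<lambda>i. a i - U i"]]) (use U in blast)+
      show "meager ((\<Union>i. U i) - \<Union> (range a))"
        by (rule meager_subset[OF meager_UN[of "\<lambda>i. U i - a i"]]) (use U in blast)+
    qed
  qed
qed

definition flip :: "nat \<Rightarrow> (nat \<Rightarrow> bool) \<Rightarrow> (nat \<Rightarrow> bool)" where
  "flip n x = x(n := \<not> x n)"

lemma flip_flip [simp]: "flip n (flip n x) = x"
  by (auto simp: flip_def)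

lemma cont_flip: "continuous_on UNIV (flip n)"
proof (rule continuous_on_coordinatewise_then_product)
  fix i
  show "continuous_on UNIV (\<lambda>x. flip n x i)"
  proof (cases "i = n")
    case True
    have "continuous_on UNIV ((\<lambda>b::bool. \<not> b) \<circ> (\<lambda>x::nat\<Rightarrow>bool. x n))"
      by (intro continuous_on_compose continuous_on_product_coordinates) (simp add: continuous_on_discrete)
    moreover have "(\<lambda>x. flip n x i) = ((\<lambda>b::bool. \<not> b) \<circ> (\<lambda>x::nat\<Rightarrow>bool. x n))"
      using True by (auto simp: flip_def fun_eq_iff)
    ultimately show ?thesis by (simp only:)
  next
    case False
    then show ?thesis by (simp add: flip_def)
  qed
qed

lemma closure_vimage_flip: "closure (flip n -` S) \<subseteq> flip n -` closure S"
proof (rule closure_minimal)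
  show "flip n -` S \<subseteq> flip n -` closure S" using closure_subset by blast
  have "closed (flip n -` closure S \<inter> UNIV)"
    using continuous_on_closed_vimage[of UNIV "flip n"] cont_flip by simp
  then show "closed (flip n -` closure S)" by simp
qed

lemma interior_vimage_flip: "interior (flip n -` S) \<subseteq> flip n -` interior S"
proof -
  have "open (flip n -` interior (flip n -` S))"
    by (rule open_vimage[OF open_interior cont_flip])
  moreover have "flip n -` interior (flip n -` S) \<subseteq> S"
    using interior_subset by force
  ultimately have "flip n -` interior (flip n -` S) \<subseteq> interior S"
    by (rule interior_maximal[rotated])
  then show ?thesis by force
qed

lemma nd_flip: "nowhere_dense N \<Longrightarrow> nowhere_dense (flip n -` N)"
  unfolding nowhere_dense_def
  using interior_mono[OF closure_vimage_flip[of n N]] interior_vimage_flip[of n "closure N"]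
  by blast

lemma meager_flip: "meager A \<Longrightarrow> meager (flip n -` A)"
  unfolding meager_def
proof (elim exE conjE)
  fix F assume "countable F" "\<forall>N\<in>F. nowhere_dense N" "A \<subseteq> \<Union>F"
  then show "\<exists>F. countable F \<and> (\<forall>N\<in>F. nowhere_dense N) \<and> flip n -` A \<subseteq> \<Union>F"
  proof (intro exI conjI)
    show "countable (vimage (flip n) ` F)" using \<open>countable F\<close> by simp
    show "\<forall>N\<in>vimage (flip n) ` F. nowhere_dense N" using \<open>\<forall>N\<in>F. nowhere_dense N\<close> nd_flip by blast
    show "flip n -` A \<subseteq> \<Union> (vimage (flip n) ` F)" using \<open>A \<subseteq> \<Union>F\<close> by blast
  qed
qed

lemma thin_flip:
  assumes "thin T" "x \<in> T" shows "flip n x \<notin> T"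
proof
  assume "flip n x \<in> T"
  moreover have "restrict (flip n x) (UNIV - {n}) = restrict x (UNIV - {n})"
    by (auto simp: restrict_def flip_def fun_eq_iff)
  moreover have "flip n x \<noteq> x" by (auto simp: flip_def fun_eq_iff)
  ultimately show False
    using assms unfolding thin_def inj_on_def by metis
qed

lemma maximal_flip:
  assumes "maximal_thin T" "x \<notin> T" shows "\<exists>n. flip n x \<in> T"
proof -
  have "thin T" using assms unfolding maximal_thin_def by blast
  have "\<not> thin (insert x T)"
    using assms unfolding maximal_thin_def by blast
  then obtain n where "\<not> inj_on (\<lambda>x. restrict x (UNIV - {n})) (insert x T)"
    unfolding thin_def by blast
  with \<open>thin T\<close> have "restrict x (UNIV - {n}) \<in> (\<lambda>x. restrict x (UNIV - {n})) ` (T - {x})"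
    unfolding thin_def by auto
  then obtain y where y: "y \<in> T" "y \<noteq> x" "restrict y (UNIV - {n}) = restrict x (UNIV - {n})"
    by force
  have "y i = x i" if "i \<noteq> n" for i
  proof -
    have "restrict y (UNIV - {n}) i = restrict x (UNIV - {n}) i" using y(3) by simp
    then show ?thesis using that by (simp add: restrict_def)
  qed
  moreover have "y n \<noteq> x n"
  proof
    assume "y n = x n"
    with \<open>\<And>i. i \<noteq> n \<Longrightarrow> y i = x i\<close> have "y = x"
      by (intro ext) (case_tac "xa = n", auto)
    with y(2) show False by blast
  qed
  ultimately have "y = flip n x" unfolding flip_def
  proof (intro ext)
    fix i
    assume a: "\<And>i. i \<noteq> n \<Longrightarrow> y i = x i" "y n \<noteq> x n"
    show "y i = (x(n := \<not> x n)) i"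
      using a by (cases "i = n") auto
  qed
  then show ?thesis using y(1) by blast
qed

lemma cylinder:
  fixes U :: "(nat \<Rightarrow> bool) set"
  assumes "open U" "x \<in> U" shows "\<exists>N. {y. \<forall>i<N. y i = x i} \<subseteq> U"
proof -
  have "openin (product_topology (\<lambda>i. euclidean) UNIV) U"
    by (metis assms(1) euclidean_product_topology open_openin)
  then obtain V where V: "finite {i. V i \<noteq> (UNIV::bool set)}" "x \<in> Pi\<^sub>E UNIV V" "Pi\<^sub>E UNIV V \<subseteq> U"
  proof -
    have "\<forall>x\<in>U. \<exists>V. finite {i \<in> UNIV. V i \<noteq> topspace euclidean} \<and> (\<forall>i\<in>UNIV. openin euclidean (V i)) \<and> x \<in> Pi\<^sub>E UNIV V \<and> Pi\<^sub>E UNIV V \<subseteq> U"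
      using \<open>openin (product_topology (\<lambda>i. euclidean) UNIV) U\<close> unfolding openin_product_topology_alt .
    then obtain V where "finite {i \<in> UNIV. V i \<noteq> topspace euclidean}" "x \<in> Pi\<^sub>E UNIV V" "Pi\<^sub>E UNIV V \<subseteq> U"
      using assms(2) by metis
    then show ?thesis using that by simp
  qed
  obtain N where N: "\<And>i. i \<in> {i. V i \<noteq> UNIV} \<Longrightarrow> i < N"
    using V(1) unfolding finite_nat_set_iff_bounded by blast
  have "{y. \<forall>i<N. y i = x i} \<subseteq> Pi\<^sub>E UNIV V"
  proof
    fix y assume y: "y \<in> {y. \<forall>i<N. y i = x i}"
    have "y i \<in> V i" for i
    proof (cases "i < N")
      case True
      have "x i \<in> V i" using V(2) by (simp add: PiE_iff)
      moreover have "y i = x i" using y True by simp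
      ultimately show ?thesis by simp
    next
      case False
      then have "V i = UNIV" using N[of i] by blast
      then show ?thesis by simp
    qed
    then show "y \<in> Pi\<^sub>E UNIV V" by (simp add: PiE_iff)
  qed
  then show ?thesis using V(3) by (intro exI[of _ N]) (rule order_trans)
qed

lemma open_cylinder: "open {y::nat\<Rightarrow>bool. \<forall>i<N. y i = x i}"
proof -
  have "open {y::nat\<Rightarrow>bool. \<forall>i\<in>{..<N}. y (id i) \<in> {x i}}"
    by (rule product_topology_basis') (auto intro: open_discrete)
  moreover have "{y::nat\<Rightarrow>bool. \<forall>i\<in>{..<N}. y (id i) \<in> {x i}} = {y. \<forall>i<N. y i = x i}" by auto
  ultimately show ?thesis by simp
qed

theorem corollary10:
  fixes T :: "(nat \<Rightarrow> bool) set"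
  assumes "maximal_thin T"
  shows "T \<notin> sets borel \<and> \<not> meager T"
proof -
  have thin: "thin T" using assms unfolding maximal_thin_def by blast
  have nm: "\<not> meager T"
  proof
    assume m: "meager T"
    have "UNIV \<subseteq> T \<union> (\<Union>n. flip n -` T)"
    proof
      fix y :: "nat \<Rightarrow> bool" assume "y \<in> UNIV"
      show "y \<in> T \<union> (\<Union>n. flip n -` T)"
      proof (cases "y \<in> T")
        case False
        then obtain n where "flip n y \<in> T" using maximal_flip[OF assms] by blast
        then show ?thesis by blast
      qed simp
    qed
    moreover have "meager (T \<union> (\<Union>n. flip n -` T))"
      by (rule meager_Un[OF m meager_UN[OF meager_flip[OF m]]])
    ultimately have "meager (UNIV :: (nat \<Rightarrow> bool) set)" by (rule meager_subset[rotated])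
    then show False using baire[of UNIV] by simp
  qed
  moreover have "T \<notin> sets borel"
  proof
    assume "T \<in> sets borel"
    then obtain U where U: "open U" "meager (T - U)" "meager (U - T)"
      using borel_bp unfolding bp_def by blast
    have "U \<noteq> {}"
    proof
      assume "U = {}" then show False using U(2) nm by simp
    qed
    then obtain x where "x \<in> U" by blast
    then obtain N where N: "{y. \<forall>i<N. y i = x i} \<subseteq> U" using cylinder U(1) by blast
    define C where "C = {y. \<forall>i<N. y i = x i}"
    have mC: "meager (C - T)" by (rule meager_subset[OF U(3)]) (use N in \<open>auto simp: C_def\<close>)
    have "C \<subseteq> (C - T) \<union> flip N -` (C - T)"
    proof
      fix y assume "y \<in> C"
      show "y \<in> (C - T) \<union> flip N -` (C - T)"
      proof (cases "y \<in> T")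
        case True
        then have "flip N y \<notin> T" using thin_flip[OF thin] by blast
        moreover have "flip N y \<in> C" using \<open>y \<in> C\<close> by (auto simp: C_def flip_def)
        ultimately show ?thesis by blast
      qed (use \<open>y \<in> C\<close> in blast)
    qed
    then have "meager C" by (rule meager_subset[OF meager_Un[OF mC meager_flip[OF mC]]])
    moreover have "x \<in> C" by (simp add: C_def)
    ultimately show False using baire[OF open_cylinder[of N x, folded C_def]] by blast
  qed
  ultimately show ?thesis by blast
qed
end
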